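(* Let $\mathcal{G}=(\mathcal{V},\mathcal{E})$ be connected, $c\in\mathbb{R}^n$, $\bar c=\frac1n\sum_ic_i$, $R_0=\tfrac12\|c-\bar c\mathbf{1}\|^2$, and let $\{\lambda^t\}_{t\ge0}$ be positive stepsizes. Set $x^0=c$ and for $t\ge0$ choose $e=(i,j)\in\mathcal{E}$ uniformly at random (independently across iterations); if $x_i^t<x_j^t$ set $x_i^{t+1}=x_i^t+\lambda^t$, $x_j^{t+1}=x_j^t-\lambda^t$; otherwise set $x_i^{t+1}=x_i^t-\lambda^t$, $x_j^{t+1}=x_j^t+\lambda^t$; all other coordinates are unchanged. Let $L^t=\frac1m\sum_{(i,j)\in\mathcal{E}}|x_i^t-x_j^t|$, $\alpha^k=\sum_{t=0}^k\lambda^t$, $\beta^k=\sum_{t=0}^k(\lambda^t)^2$. Then for all $k\ge1$ $$\min_{t=0,\dots,k}\mathbb{E}[L^t]\le\sum_{t=0}^k\frac{\lambda^t}{\alpha^k}\mathbb{E}[L^t]\le U^k:=\frac{R_0}{\alpha^k}+\frac{\beta^k}{\alpha^k}.$$ Moreover: (i) if $\lambda^t=\lambda^0>0$ for all $t$, then $U^k=\frac{R_0}{\lambda^0(k+1)}+\lambda^0$; (ii) for fixed $k$ and any $R>0$, over all positive $(\lambda^0,\dots,\lambda^k)$ the quantity $\frac{R+\beta^k}{\alpha^k}$ is minimized by $\lambda^t=\sqrt{R/(k+1)}$ for all $t\le k$, with minimum value $2\sqrt{R/(k+1)}$; in particular if $R\ge R_0$ this choice gives $U^k\le2\sqrt{R/(k+1)}$;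 (iii) if $\lambda^t=a/\sqrt{t+1}$ with $a>0$, then $$U^k\le\frac{R_0+a^2(\log(k+3/2)+\log 2)}{2a(\sqrt{k+2}-1)}.$$
   Context: $\mathcal{G}$ is an undirected graph with vertices $\mathcal{V}=\{1,\dots,n\}$ and $m=|\mathcal{E}|$ edges, each edge $e=(i,j)$ having an arbitrary but fixed orientation; $\mathbf{1}$ is the all-ones vector in $\mathbb{R}^n$ and $\|\cdot\|$ the Euclidean norm. *)

theory Defs
  imports Complex_Main
begin

type_synonym vec = "nat \<Rightarrow> real"
type_synonym edge = "nat \<times> nat"

text \<open>Graph on vertices {0..<n}; each undirected edge appears once, with a fixed orientation (i,j).\<close>
definition simple_graph :: "nat \<Rightarrow> edge list \<Rightarrow> bool" where
  "simple_graph n E \<longleftrightarrow> distinct E \<and>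
     (\<forall>(i,j)\<in>set E. i < n \<and> j < n \<and> i \<noteq> j \<and> (j,i) \<notin> set E)"

definition connected_graph :: "nat \<Rightarrow> edge list \<Rightarrow> bool" where
  "connected_graph n E \<longleftrightarrow>
     (\<forall>u<n. \<forall>v<n. (u, v) \<in> (set E \<union> (set E)\<inverse>)\<^sup>*)"

definition step :: "real \<Rightarrow> edge \<Rightarrow> vec \<Rightarrow> vec" where
  "step l e x = (case e of (i,j) \<Rightarrow>
     if x i < x j then x(i := x i + l, j := x j - l)
     else x(i := x i - l, j := x j + l))"

fun run :: "(nat \<Rightarrow> real) \<Rightarrow> vec \<Rightarrow> nat \<Rightarrow> edge list \<Rightarrow> vec" where
  "run lam x t [] = x"
| "run lam x t (e # es) = run lam (step (lam t) e x) (Suc t) es"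

definition iterate :: "(nat \<Rightarrow> real) \<Rightarrow> vec \<Rightarrow> edge list \<Rightarrow> vec" where
  "iterate lam c s = run lam c 0 s"

definition Lfun :: "edge list \<Rightarrow> vec \<Rightarrow> real" where
  "Lfun E x = (\<Sum>(i,j)\<leftarrow>E. \<bar>x i - x j\<bar>) / real (length E)"

text \<open>All possible edge sample sequences of length t; each has probability (1/m)^t
  under independent uniform edge choice.\<close>
definition seqs :: "edge list \<Rightarrow> nat \<Rightarrow> edge list set" where
  "seqs E t = {s. set s \<subseteq> set E \<and> length s = t}"

definition EL :: "edge list \<Rightarrow> (nat \<Rightarrow> real) \<Rightarrow> vec \<Rightarrow> nat \<Rightarrow> real" where
  "EL E lam c t = (\<Sum>s\<in>seqs E t. Lfun E (iterate lam c s)) / real (length E) ^ t"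

definition cbar :: "nat \<Rightarrow> vec \<Rightarrow> real" where
  "cbar n c = (\<Sum>i<n. c i) / real n"

definition R0 :: "nat \<Rightarrow> vec \<Rightarrow> real" where
  "R0 n c = (1/2) * (\<Sum>i<n. (c i - cbar n c)^2)"

definition alpha :: "(nat \<Rightarrow> real) \<Rightarrow> nat \<Rightarrow> real" where
  "alpha lam k = (\<Sum>t=0..k. lam t)"

definition beta :: "(nat \<Rightarrow> real) \<Rightarrow> nat \<Rightarrow> real" where
  "beta lam k = (\<Sum>t=0..k. (lam t)^2)"

definition Ubound :: "real \<Rightarrow> (nat \<Rightarrow> real) \<Rightarrow> nat \<Rightarrow> real" where
  "Ubound R lam k = R / alpha lam k + beta lam k / alpha lam k"

end

theory Submission
  imports Defs
begin


lemma ln_lower: fixes z :: real assumes "z \<ge> 0" shows "2*z/(2+z) \<le> ln (1+z)"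
proof -
  let ?f = "\<lambda>x::real. ln (1+x) - 2*x/(2+x)"
  have "?f 0 \<le> ?f z"
  proof (rule DERIV_nonneg_imp_nondecreasing[OF assms])
    fix x :: real assume x: "0 \<le> x" "x \<le> z"
    have d: "DERIV ?f x :> (1/(1+x) - (2*(2+x) - 2*x*1)/((2+x)*(2+x)))"
      using x by (auto intro!: derivative_eq_intros simp: field_simps)
    have "1/(1+x) - (2*(2+x) - 2*x*1)/((2+x)*(2+x)) = x^2/((1+x)*(2+x)^2)"
    proof -
      have p: "1+x > 0" "2+x > 0" using x by auto
      show ?thesis using p by (simp add: divide_simps power2_eq_square) (simp add: algebra_simps)
    qed
    also have "\<dots> \<ge> 0" using x by simp
    finally show "\<exists>y. DERIV ?f x :> y \<and> y \<ge> 0" using d by blast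
  qed
  thus ?thesis by simp
qed

lemma harm_step: fixes t :: nat
  shows "1/(real t+1) \<le> ln (real t + 3/2) - ln (real t + 1/2)"
proof -
  define z where "z = 1/(real t + 1/2)"
  have z: "z \<ge> 0" unfolding z_def by simp
  have nn: "4 + (real t * 12 + real t * (real t * 8)) \<noteq> 0"
  proof -
    have "0 \<le> real t * (real t * 8)" by simp
    moreover have "0 \<le> real t * 12" by simp
    ultimately show ?thesis by linarith
  qed
  have "2*z/(2+z) = 1/(real t+1)" unfolding z_def using nn by (simp add: field_simps)
  moreover have "1 + z = (real t + 3/2)/(real t + 1/2)" unfolding z_def by (simp add: field_simps)
  moreover have "ln ((real t + 3/2)/(real t + 1/2)) = ln (real t + 3/2) - ln (real t + 1/2)"
    by (rule ln_divide_pos) (simp_all add: add_pos_pos)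
  ultimately show ?thesis using ln_lower[OF z] by simp
qed

lemma harm_sum: "(\<Sum>t=0..k. 1/(real t+1)) \<le> ln (real k + 3/2) + ln 2"
proof (induction k)
  case 0
  have "ln (3/2::real) + ln 2 = ln 3" using ln_mult[of "3/2" "2::real"] by simp
  moreover have "1 \<le> ln (3::real)"
    using ln_ge_iff[of 3 1] exp_le by (smt (verit) exp_gt_zero ln_exp ln_le_cancel_iff)
  ultimately show ?case by simp
next
  case (Suc k)
  have "(\<Sum>t=0..Suc k. 1/(real t+1)) = (\<Sum>t=0..k. 1/(real t+1)) + 1/(real (Suc k)+1)" by simp
  also have "\<dots> \<le> ln (real k + 3/2) + ln 2 + (ln (real (Suc k) + 3/2) - ln (real (Suc k) + 1/2))"
    using Suc harm_step[of "Suc k"] by linarith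
  also have "\<dots> = ln (real (Suc k) + 3/2) + ln 2" by simp
  finally show ?case .
qed

lemma sqrt_step: fixes t :: nat
  shows "2*(sqrt (real t+2) - sqrt (real t+1)) \<le> 1/sqrt(real t+1)"
proof -
  have a: "sqrt (real t+2) > 0" "sqrt (real t+1) > 0" by auto
  have "(sqrt (real t+2) - sqrt (real t+1)) * (sqrt (real t+2) + sqrt (real t+1)) = 1"
    by (simp add: algebra_simps)
  hence e: "sqrt (real t+2) - sqrt (real t+1) = 1/(sqrt (real t+2) + sqrt (real t+1))"
    using a by (auto simp add: eq_divide_eq intro: add_pos_pos)
  have "sqrt (real t+1) \<le> sqrt (real t+2)" by simp
  hence "2/(sqrt (real t+2) + sqrt (real t+1)) \<le> 1/sqrt(real t+1)"
    using a by (simp add: divide_simps add_pos_pos less_imp_not_less)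
  thus ?thesis using e by simp
qed

lemma sqrt_sum: "2*(sqrt (real k + 2) - 1) \<le> (\<Sum>t=0..k. 1/sqrt(real t+1))"
proof (induction k)
  case 0 show ?case using sqrt_step[of 0] by simp
next
  case (Suc k)
  show ?case using Suc sqrt_step[of "Suc k"] by (simp add: algebra_simps)
qed



definition Vf :: "nat \<Rightarrow> vec \<Rightarrow> vec \<Rightarrow> real" where
  "Vf n c x = (1/2) * (\<Sum>i<n. (x i - cbar n c)^2)"

lemma sum_upd1:
  fixes g :: "real \<Rightarrow> real"
  assumes "finite A" "i \<in> A"
  shows "(\<Sum>k\<in>A. g ((x(i:=a)) k)) = (\<Sum>k\<in>A. g (x k)) - g (x i) + g a"
proof -
  have "(\<Sum>k\<in>A. g ((x(i:=a)) k)) = g ((x(i:=a)) i) + (\<Sum>k\<in>A-{i}. g ((x(i:=a)) k))"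
    using assms by (rule sum.remove)
  also have "(\<Sum>k\<in>A-{i}. g ((x(i:=a)) k)) = (\<Sum>k\<in>A-{i}. g (x k))"
    by (rule sum.cong) auto
  also have "(\<Sum>k\<in>A. g (x k)) = g (x i) + (\<Sum>k\<in>A-{i}. g (x k))"
    using assms by (rule sum.remove)
  ultimately show ?thesis by simp
qed

lemma sum_upd2:
  fixes g :: "real \<Rightarrow> real"
  assumes "finite A" "i \<in> A" "j \<in> A" "i \<noteq> j"
  shows "(\<Sum>k\<in>A. g ((x(i:=a, j:=b)) k)) = (\<Sum>k\<in>A. g (x k)) - g (x i) - g (x j) + g a + g b"
  using sum_upd1[OF assms(1,3), of g "x(i:=a)" b] sum_upd1[OF assms(1,2), of g x a] assms(4)
  by simp

lemma r1: fixes S a b l cb :: real shows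
 "(1/2)*(S - (a-cb)^2 - (b-cb)^2 + (a+l-cb)^2 + (b-l-cb)^2) = (1/2)*S - l*(b-a) + l^2"
  by (simp add: power2_eq_square algebra_simps)
lemma r2: fixes S a b l cb :: real shows
 "(1/2)*(S - (a-cb)^2 - (b-cb)^2 + (a-l-cb)^2 + (b+l-cb)^2) = (1/2)*S - l*(a-b) + l^2"
  by (simp add: power2_eq_square algebra_simps)

lemma step_V:
  assumes "i < n" "j < n" "i \<noteq> j"
  shows "Vf n c (step l (i,j) x) = Vf n c x - l * \<bar>x i - x j\<bar> + l^2"
proof (cases "x i < x j")
  case True
  have "Vf n c (step l (i,j) x) = (1/2) * ((\<Sum>k<n. (x k - cbar n c)^2) - (x i - cbar n c)^2 - (x j - cbar n c)^2
     + (x i + l - cbar n c)^2 + (x j - l - cbar n c)^2)"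
  proof -
    have st: "step l (i,j) x = x(i := x i + l, j := x j - l)" using True by (simp add: step_def)
    have "(\<Sum>k<n. ((x(i := x i + l, j := x j - l)) k - cbar n c)^2) = (\<Sum>k<n. (x k - cbar n c)^2) - (x i - cbar n c)^2 - (x j - cbar n c)^2
     + (x i + l - cbar n c)^2 + (x j - l - cbar n c)^2"
      using assms by (intro sum_upd2[where g = "\<lambda>y. (y - cbar n c)^2"]) auto
    thus ?thesis unfolding Vf_def st by simp
  qed
  moreover have "\<bar>x i - x j\<bar> = x j - x i" using True by simp
  ultimately show ?thesis unfolding Vf_def using r1[of "\<Sum>k<n. (x k - cbar n c)^2" "x i" "cbar n c" "x j" l] by simp
next
  case False
  have "Vf n c (step l (i,j) x) = (1/2) * ((\<Sum>k<n. (x k - cbar n c)^2) - (x i - cbar n c)^2 - (x j - cbar n c)^2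
     + (x i - l - cbar n c)^2 + (x j + l - cbar n c)^2)"
  proof -
    have st: "step l (i,j) x = x(i := x i - l, j := x j + l)" using False by (simp add: step_def)
    have "(\<Sum>k<n. ((x(i := x i - l, j := x j + l)) k - cbar n c)^2) = (\<Sum>k<n. (x k - cbar n c)^2) - (x i - cbar n c)^2 - (x j - cbar n c)^2
     + (x i - l - cbar n c)^2 + (x j + l - cbar n c)^2"
      using assms by (intro sum_upd2[where g = "\<lambda>y. (y - cbar n c)^2"]) auto
    thus ?thesis unfolding Vf_def st by simp
  qed
  moreover have "\<bar>x i - x j\<bar> = x i - x j" using False by simp
  ultimately show ?thesis unfolding Vf_def using r2[of "\<Sum>k<n. (x k - cbar n c)^2" "x i" "cbar n c" "x j" l] by simp
qed

lemma run_append: "run lam x t (s @ [e]) = step (lam (t + length s)) e (run lam x t s)"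
  by (induction s arbitrary: x t) auto

lemma finite_seqs: "finite (seqs E t)"
  unfolding seqs_def by (rule finite_lists_length_eq) simp

lemma card_seqs: "card (seqs E t) = card (set E) ^ t"
  unfolding seqs_def by (rule card_lists_length_eq) simp

lemma seqs_Suc: "seqs E (Suc t) = (\<lambda>(s,e). s @ [e]) ` (seqs E t \<times> set E)"
proof
  show "seqs E (Suc t) \<subseteq> (\<lambda>(s,e). s @ [e]) ` (seqs E t \<times> set E)"
  proof
    fix s assume s: "s \<in> seqs E (Suc t)"
    then have "s \<noteq> []" unfolding seqs_def by auto
    then obtain ys y where sy: "s = ys @ [y]" using rev_exhaust by blast
    show "s \<in> (\<lambda>(s,e). s @ [e]) ` (seqs E t \<times> set E)"
      using s sy unfolding seqs_def by (auto intro!: image_eqI[of _ _ "(ys,y)"])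
  qed
  show "(\<lambda>(s,e). s @ [e]) ` (seqs E t \<times> set E) \<subseteq> seqs E (Suc t)"
    unfolding seqs_def by auto
qed

lemma sum_seqs_Suc: "(\<Sum>s\<in>seqs E (Suc t). f s) = (\<Sum>s\<in>seqs E t. \<Sum>e\<in>set E. f (s @ [e]))"
proof -
  have inj: "inj_on (\<lambda>(s,e). s @ [e]) (seqs E t \<times> set E)"
    by (auto simp: inj_on_def)
  have "(\<Sum>s\<in>seqs E (Suc t). f s) = (\<Sum>p\<in>seqs E t \<times> set E. f ((\<lambda>(s,e). s @ [e]) p))"
    unfolding seqs_Suc by (rule sum.reindex[OF inj, unfolded comp_def])
  also have "\<dots> = (\<Sum>s\<in>seqs E t. \<Sum>e\<in>set E. f (s @ [e]))"
    by (subst sum.cartesian_product) (rule sum.cong, auto)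
  finally show ?thesis .
qed

definition EV :: "nat \<Rightarrow> edge list \<Rightarrow> (nat \<Rightarrow> real) \<Rightarrow> vec \<Rightarrow> nat \<Rightarrow> real" where
  "EV n E lam c t = (\<Sum>s\<in>seqs E t. Vf n c (iterate lam c s)) / real (length E) ^ t"

lemma sum_edges_V:
  assumes g: "simple_graph n E"
  shows "(\<Sum>e\<in>set E. Vf n c (step l e x)) = real (length E) * (Vf n c x - l * Lfun E x + l^2)"
proof -
  have d: "distinct E" using g unfolding simple_graph_def by auto
  have "(\<Sum>e\<in>set E. Vf n c (step l e x)) = (\<Sum>e\<in>set E. Vf n c x - l * (\<lambda>(i,j). \<bar>x i - x j\<bar>) e + l^2)"
  proof (rule sum.cong)
    fix e assume "e \<in> set E"
    then obtain i j where e: "e = (i,j)" "i < n" "j < n" "i \<noteq> j"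
      using g unfolding simple_graph_def by fastforce
    show "Vf n c (step l e x) = Vf n c x - l * (\<lambda>(i,j). \<bar>x i - x j\<bar>) e + l^2"
      using step_V[OF e(2-4)] e(1) by simp
  qed simp
  also have "\<dots> = real (card (set E)) * (Vf n c x + l^2) - l * (\<Sum>e\<in>set E. (\<lambda>(i,j). \<bar>x i - x j\<bar>) e)"
    by (simp add: sum.distrib sum_subtractf sum_distrib_left algebra_simps)
  also have "(\<Sum>e\<in>set E. (\<lambda>(i,j). \<bar>x i - x j\<bar>) e) = (\<Sum>(i,j)\<leftarrow>E. \<bar>x i - x j\<bar>)"
    using d by (simp add: sum_list_distinct_conv_sum_set)
  also have "card (set E) = length E" using d by (simp add: distinct_card)
  finally show ?thesis unfolding Lfun_def
    by (cases "length E = 0") (simp_all add: algebra_simps)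
qed

lemma EV_Suc:
  assumes g: "simple_graph n E" and ne: "E \<noteq> []"
  shows "EV n E lam c (Suc t) = EV n E lam c t - lam t * EL E lam c t + (lam t)^2"
proof -
  let ?m = "real (length E)"
  have m: "?m > 0" using ne by simp
  have d: "distinct E" using g unfolding simple_graph_def by auto
  have cs: "real (card (seqs E t)) = ?m ^ t" using card_seqs[of E t] d by (simp add: distinct_card)
  have "(\<Sum>s\<in>seqs E (Suc t). Vf n c (iterate lam c s))
      = (\<Sum>s\<in>seqs E t. \<Sum>e\<in>set E. Vf n c (step (lam t) e (iterate lam c s)))"
    unfolding sum_seqs_Suc iterate_def
    by (rule sum.cong) (auto simp: run_append seqs_def)
  also have "\<dots> = (\<Sum>s\<in>seqs E t. ?m * (Vf n c (iterate lam c s) - lam t * Lfun E (iterate lam c s) + (lam t)^2))"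
    using sum_edges_V[OF g] by simp
  also have "\<dots> = ?m * ((\<Sum>s\<in>seqs E t. Vf n c (iterate lam c s)) - lam t * (\<Sum>s\<in>seqs E t. Lfun E (iterate lam c s))
        + real (card (seqs E t)) * (lam t)^2)"
  proof -
    have "(\<Sum>s\<in>seqs E t. ?m * (Vf n c (iterate lam c s) - lam t * Lfun E (iterate lam c s) + (lam t)^2))
       = ?m * (\<Sum>s\<in>seqs E t. (Vf n c (iterate lam c s) - lam t * Lfun E (iterate lam c s) + (lam t)^2))"
      by (rule sum_distrib_left[symmetric])
    also have "(\<Sum>s\<in>seqs E t. (Vf n c (iterate lam c s) - lam t * Lfun E (iterate lam c s) + (lam t)^2))
       = (\<Sum>s\<in>seqs E t. Vf n c (iterate lam c s)) - lam t * (\<Sum>s\<in>seqs E t. Lfun E (iterate lam c s))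
        + real (card (seqs E t)) * (lam t)^2"
      by (simp add: sum.distrib sum_subtractf sum_distrib_left)
    finally show ?thesis .
  qed
  finally have "(\<Sum>s\<in>seqs E (Suc t). Vf n c (iterate lam c s)) = ?m * ((\<Sum>s\<in>seqs E t. Vf n c (iterate lam c s)) - lam t * (\<Sum>s\<in>seqs E t. Lfun E (iterate lam c s))
        + ?m ^ t * (lam t)^2)" using cs by simp
  hence "(\<Sum>s\<in>seqs E (Suc t). Vf n c (iterate lam c s)) / ?m ^ Suc t
     = ((\<Sum>s\<in>seqs E t. Vf n c (iterate lam c s)) - lam t * (\<Sum>s\<in>seqs E t. Lfun E (iterate lam c s))
        + ?m ^ t * (lam t)^2) / ?m ^ t" using m by simp
  also have "\<dots> = (\<Sum>s\<in>seqs E t. Vf n c (iterate lam c s)) / ?m ^ t - lam t * ((\<Sum>s\<in>seqs E t. Lfun E (iterate lam c s)) / ?m ^ t)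
        + (lam t)^2" using m by (simp add: diff_divide_distrib add_divide_distrib)
  finally show ?thesis unfolding EV_def EL_def .
qed

lemma EV_0: "EV n E lam c 0 = R0 n c"
proof -
  have "seqs E 0 = {[]}" unfolding seqs_def by auto
  thus ?thesis unfolding EV_def Vf_def R0_def iterate_def by simp
qed

lemma EV_nonneg: "EV n E lam c t \<ge> 0"
  unfolding EV_def Vf_def by (intro divide_nonneg_nonneg sum_nonneg mult_nonneg_nonneg) auto

lemma EV_sum:
  assumes g: "simple_graph n E" and ne: "E \<noteq> []"
  shows "EV n E lam c (Suc k) = R0 n c - (\<Sum>t=0..k. lam t * EL E lam c t) + beta lam k"
proof (induction k)
  case 0 show ?case using EV_Suc[OF g ne, of lam c 0] EV_0 unfolding beta_def by simp
next
  case (Suc k) show ?case using EV_Suc[OF g ne, of lam c "Suc k"] Suc unfolding beta_def by simp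
qed

lemma weighted_bound:
  assumes g: "simple_graph n E" and ne: "E \<noteq> []"
  shows "(\<Sum>t=0..k. lam t * EL E lam c t) \<le> R0 n c + beta lam k"
  using EV_sum[OF g ne, of lam c k] EV_nonneg[of n E lam c "Suc k"] by linarith


theorem mainTheorem18:
  fixes n :: nat and E :: "edge list" and c :: vec and lam :: "nat \<Rightarrow> real"
  assumes graph: "simple_graph n E"
    and nonempty: "E \<noteq> []"
    and conn: "connected_graph n E"
    and pos: "\<forall>t. lam t > 0"
  shows "\<forall>k\<ge>1.
      (Min {EL E lam c t | t. t \<le> k} \<le> (\<Sum>t=0..k. lam t / alpha lam k * EL E lam c t)
       \<and> (\<Sum>t=0..k. lam t / alpha lam k * EL E lam c t) \<le> Ubound (R0 n c) lam k)
    \<and> ((\<forall>t. lam t = lam 0) \<longrightarrow>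
         Ubound (R0 n c) lam k = R0 n c / (lam 0 * real (k + 1)) + lam 0)
    \<and> (\<forall>R>0.
         (\<forall>\<mu>::nat \<Rightarrow> real. (\<forall>t\<le>k. \<mu> t > 0) \<longrightarrow>
            (R + beta (\<lambda>t. sqrt (R / real (k + 1))) k) / alpha (\<lambda>t. sqrt (R / real (k + 1))) k
              \<le> (R + beta \<mu> k) / alpha \<mu> k)
       \<and> (R + beta (\<lambda>t. sqrt (R / real (k + 1))) k) / alpha (\<lambda>t. sqrt (R / real (k + 1))) k
              = 2 * sqrt (R / real (k + 1))
       \<and> (R \<ge> R0 n c \<longrightarrow>
            Ubound (R0 n c) (\<lambda>t. sqrt (R / real (k + 1))) k \<le> 2 * sqrt (R / real (k + 1))))
    \<and> (\<forall>a>0. (\<forall>t. lam t = a / sqrt (real t + 1)) \<longrightarrow>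
         Ubound (R0 n c) lam k
           \<le> (R0 n c + a^2 * (ln (real k + 3/2) + ln 2)) / (2 * a * (sqrt (real k + 2) - 1)))"
  proof (intro allI impI)
  fix k :: nat assume k1: "k \<ge> 1"
  have R0nn: "R0 n c \<ge> 0" unfolding R0_def by (simp add: sum_nonneg)
  have apos: "alpha lam k > 0" unfolding alpha_def using pos by (intro sum_pos) auto
  have wsum: "(\<Sum>t=0..k. lam t / alpha lam k) = 1"
    using apos unfolding sum_divide_distrib[symmetric] by (simp add: alpha_def)
  have fin: "finite {EL E lam c t | t. t \<le> k}" by simp
  have A1: "Min {EL E lam c t | t. t \<le> k} \<le> (\<Sum>t=0..k. lam t / alpha lam k * EL E lam c t)"
  proof -
    have "Min {EL E lam c t | t. t \<le> k} = (\<Sum>t=0..k. lam t / alpha lam k * Min {EL E lam c t | t. t \<le> k})"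
      by (simp only: sum_distrib_right[symmetric] wsum mult_1)
    also have "\<dots> \<le> (\<Sum>t=0..k. lam t / alpha lam k * EL E lam c t)"
    proof (rule sum_mono)
      fix t assume "t \<in> {0..k}"
      then have "Min {EL E lam c t | t. t \<le> k} \<le> EL E lam c t" using fin by (intro Min_le) auto
      moreover have "lam t / alpha lam k \<ge> 0" using pos apos by (simp add: less_imp_le)
      ultimately show "lam t / alpha lam k * Min {EL E lam c t | t. t \<le> k} \<le> lam t / alpha lam k * EL E lam c t"
        by (rule mult_left_mono)
    qed
    finally show ?thesis .
  qed
  have A2: "(\<Sum>t=0..k. lam t / alpha lam k * EL E lam c t) \<le> Ubound (R0 n c) lam k"
  proof -
    have "(\<Sum>t=0..k. lam t / alpha lam k * EL E lam c t) = (\<Sum>t=0..k. lam t * EL E lam c t) / alpha lam k"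
      by (simp add: sum_divide_distrib)
    also have "\<dots> \<le> (R0 n c + beta lam k) / alpha lam k"
      using weighted_bound[OF graph nonempty, where k=k and lam=lam and c=c] apos by (simp add: divide_right_mono)
    also have "\<dots> = Ubound (R0 n c) lam k" unfolding Ubound_def by (simp add: add_divide_distrib)
    finally show ?thesis .
  qed
  have I: "(\<forall>t. lam t = lam 0) \<longrightarrow> Ubound (R0 n c) lam k = R0 n c / (lam 0 * real (k + 1)) + lam 0"
  proof
    assume h: "\<forall>t. lam t = lam 0"
    have l0: "lam 0 > 0" using pos by auto
    have "alpha lam k = real (k+1) * lam 0" unfolding alpha_def using h by (subst sum.cong[OF refl, of _ _ "\<lambda>_. lam 0"]) auto
    moreover have "beta lam k = real (k+1) * (lam 0)^2" unfolding beta_def using h by (subst sum.cong[OF refl, of _ _ "\<lambda>_. (lam 0)^2"]) (metis, simp)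
    ultimately show "Ubound (R0 n c) lam k = R0 n c / (lam 0 * real (k + 1)) + lam 0"
      unfolding Ubound_def using l0 by (simp add: power2_eq_square mult.commute)
  qed
  have II: "\<forall>R>0.
         (\<forall>\<mu>::nat \<Rightarrow> real. (\<forall>t\<le>k. \<mu> t > 0) \<longrightarrow>
            (R + beta (\<lambda>t. sqrt (R / real (k + 1))) k) / alpha (\<lambda>t. sqrt (R / real (k + 1))) k
              \<le> (R + beta \<mu> k) / alpha \<mu> k)
       \<and> (R + beta (\<lambda>t. sqrt (R / real (k + 1))) k) / alpha (\<lambda>t. sqrt (R / real (k + 1))) k
              = 2 * sqrt (R / real (k + 1))
       \<and> (R \<ge> R0 n c \<longrightarrow>
            Ubound (R0 n c) (\<lambda>t. sqrt (R / real (k + 1))) k \<le> 2 * sqrt (R / real (k + 1)))"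
  proof (intro allI impI)
    fix R :: real assume R: "R > 0"
    define q where "q = sqrt (R / real (k + 1))"
    have q: "q > 0" unfolding q_def using R by simp
    have Rq: "R = real (k+1) * q^2" unfolding q_def using R by simp
    have al: "alpha (\<lambda>t. q) k = real (k+1) * q" unfolding alpha_def by simp
    have be: "beta (\<lambda>t. q) k = R" unfolding beta_def using Rq by simp
    have val: "(R + beta (\<lambda>t. q) k) / alpha (\<lambda>t. q) k = 2 * q"
    proof -
      have "R + R = (2*q) * (real (k+1) * q)" using Rq by (simp add: power2_eq_square algebra_simps)
      moreover have "real (k+1) * q \<noteq> 0" using q by simp
      ultimately show ?thesis unfolding al be by simp
    qed
    have ineq: "2 * q \<le> (R + beta \<mu> k) / alpha \<mu> k" if mu: "\<forall>t\<le>k. \<mu> t > 0" for \<mu>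
    proof -
      have am: "alpha \<mu> k > 0" unfolding alpha_def using mu by (intro sum_pos) auto
      have "0 \<le> (\<Sum>t=0..k. (\<mu> t - q)^2)" by (simp add: sum_nonneg)
      also have "(\<Sum>t=0..k. (\<mu> t - q)^2) = (\<Sum>t=0..k. (\<mu> t)^2) - 2 * q * (\<Sum>t=0..k. \<mu> t) + real (k+1) * q^2"
      proof -
        have e: "(\<mu> t - q)^2 = (\<mu> t)^2 - (2*q) * \<mu> t + q^2" for t by (simp add: power2_diff algebra_simps)
        have "(\<Sum>t=0..k. (\<mu> t - q)^2) = (\<Sum>t=0..k. (\<mu> t)^2) - (\<Sum>t=0..k. (2*q) * \<mu> t) + (\<Sum>t=0..k. q^2)"
          by (simp only: e sum.distrib sum_subtractf)
        also have "(\<Sum>t=0..k. (2*q) * \<mu> t) = (2*q) * (\<Sum>t=0..k. \<mu> t)" by (rule sum_distrib_left[symmetric])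
        finally show ?thesis by simp
      qed
      finally have "2 * q * alpha \<mu> k \<le> R + beta \<mu> k" unfolding alpha_def beta_def using Rq by linarith
      thus ?thesis using am by (simp add: pos_le_divide_eq)
    qed
    show "(\<forall>\<mu>::nat \<Rightarrow> real. (\<forall>t\<le>k. \<mu> t > 0) \<longrightarrow>
            (R + beta (\<lambda>t. sqrt (R / real (k + 1))) k) / alpha (\<lambda>t. sqrt (R / real (k + 1))) k
              \<le> (R + beta \<mu> k) / alpha \<mu> k)
       \<and> (R + beta (\<lambda>t. sqrt (R / real (k + 1))) k) / alpha (\<lambda>t. sqrt (R / real (k + 1))) k
              = 2 * sqrt (R / real (k + 1))
       \<and> (R \<ge> R0 n c \<longrightarrow>
            Ubound (R0 n c) (\<lambda>t. sqrt (R / real (k + 1))) k \<le> 2 * sqrt (R / real (k + 1)))"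
      unfolding q_def[symmetric]
    proof (intro conjI allI impI)
      fix \<mu> :: "nat \<Rightarrow> real" assume "\<forall>t\<le>k. \<mu> t > 0"
      then show "(R + beta (\<lambda>t. q) k) / alpha (\<lambda>t. q) k \<le> (R + beta \<mu> k) / alpha \<mu> k"
        using ineq val by simp
    next
      show "(R + beta (\<lambda>t. q) k) / alpha (\<lambda>t. q) k = 2 * q" by (rule val)
    next
      assume "R0 n c \<le> R"
      have "Ubound (R0 n c) (\<lambda>t. q) k = (R0 n c + beta (\<lambda>t. q) k) / alpha (\<lambda>t. q) k"
        unfolding Ubound_def by (simp add: add_divide_distrib)
      also have "\<dots> \<le> (R + beta (\<lambda>t. q) k) / alpha (\<lambda>t. q) k"
        using \<open>R0 n c \<le> R\<close> al q by (intro divide_right_mono) auto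
      finally show "Ubound (R0 n c) (\<lambda>t. q) k \<le> 2 * q" using val by simp
    qed
  qed
  have III: "\<forall>a>0. (\<forall>t. lam t = a / sqrt (real t + 1)) \<longrightarrow>
         Ubound (R0 n c) lam k
           \<le> (R0 n c + a^2 * (ln (real k + 3/2) + ln 2)) / (2 * a * (sqrt (real k + 2) - 1))"
  proof (intro allI impI)
    fix a :: real assume a: "a > 0" and h: "\<forall>t. lam t = a / sqrt (real t + 1)"
    have al: "alpha lam k = a * (\<Sum>t=0..k. 1/sqrt(real t+1))"
      unfolding alpha_def using h by (simp add: sum_distrib_left)
    have be: "beta lam k = a^2 * (\<Sum>t=0..k. 1/(real t+1))"
      unfolding beta_def using h by (simp add: sum_distrib_left power_divide)
    have sk: "sqrt (real k + 2) > 1" using k1 by simp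
    have D: "2 * a * (sqrt (real k + 2) - 1) > 0" using sk a by simp
    have aD: "2 * a * (sqrt (real k + 2) - 1) \<le> alpha lam k"
      unfolding al using sqrt_sum[of k] a by (simp add: mult.assoc mult_left_mono)
    have bH: "beta lam k \<le> a^2 * (ln (real k + 3/2) + ln 2)"
      unfolding be using harm_sum[of k] by (simp add: mult_left_mono)
    have num: "0 \<le> R0 n c + a^2 * (ln (real k + 3/2) + ln 2)"
    proof -
      have "ln (real k + 3/2) \<ge> 0" by simp
      moreover have "ln (2::real) \<ge> 0" by simp
      ultimately show ?thesis using R0nn by simp
    qed
    have "Ubound (R0 n c) lam k = (R0 n c + beta lam k) / alpha lam k"
      unfolding Ubound_def by (simp add: add_divide_distrib)
    also have "\<dots> \<le> (R0 n c + a^2 * (ln (real k + 3/2) + ln 2)) / alpha lam k"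
      using bH apos by (intro divide_right_mono) auto
    also have "\<dots> \<le> (R0 n c + a^2 * (ln (real k + 3/2) + ln 2)) / (2 * a * (sqrt (real k + 2) - 1))"
      using num D aD by (intro divide_left_mono) auto
    finally show "Ubound (R0 n c) lam k
           \<le> (R0 n c + a^2 * (ln (real k + 3/2) + ln 2)) / (2 * a * (sqrt (real k + 2) - 1))" .
  qed
  show "(Min {EL E lam c t | t. t \<le> k} \<le> (\<Sum>t=0..k. lam t / alpha lam k * EL E lam c t)
       \<and> (\<Sum>t=0..k. lam t / alpha lam k * EL E lam c t) \<le> Ubound (R0 n c) lam k)
    \<and> ((\<forall>t. lam t = lam 0) \<longrightarrow>
         Ubound (R0 n c) lam k = R0 n c / (lam 0 * real (k + 1)) + lam 0)
    \<and> (\<forall>R>0.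
         (\<forall>\<mu>::nat \<Rightarrow> real. (\<forall>t\<le>k. \<mu> t > 0) \<longrightarrow>
            (R + beta (\<lambda>t. sqrt (R / real (k + 1))) k) / alpha (\<lambda>t. sqrt (R / real (k + 1))) k
              \<le> (R + beta \<mu> k) / alpha \<mu> k)
       \<and> (R + beta (\<lambda>t. sqrt (R / real (k + 1))) k) / alpha (\<lambda>t. sqrt (R / real (k + 1))) k
              = 2 * sqrt (R / real (k + 1))
       \<and> (R \<ge> R0 n c \<longrightarrow>
            Ubound (R0 n c) (\<lambda>t. sqrt (R / real (k + 1))) k \<le> 2 * sqrt (R / real (k + 1))))
    \<and> (\<forall>a>0. (\<forall>t. lam t = a / sqrt (real t + 1)) \<longrightarrow>
         Ubound (R0 n c) lam k
           \<le> (R0 n c + a^2 * (ln (real k + 3/2) + ln 2)) / (2 * a * (sqrt (real k + 2) - 1)))"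
    using A1 A2 I II III by blast
qed

end
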